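(* Let $\delta,\gamma\in\mathbb R$. For any pair of points $(\xi,\eta),(z_1,z_2)\in(0,\infty)\times\mathbb R$ there exists a smooth control $u:[0,1]\to\mathbb R$ such that the system \[ \tfrac{d}{dt}z_1(t)=-z_1(t)^4z_2(t),\qquad \tfrac{d}{dt}z_2(t)=\delta z_1(t)+2z_1(t)^3z_2(t)^2-\gamma z_1(t)^4z_2(t)+u(t) \] has a solution on $[0,1]$ with $z_1(0)=\xi$, $z_2(0)=\eta$, $z_1(1)=z_1$, $z_2(1)=z_2$ and $z_1(t)>0$ for all $t\in[0,1]$. *)

theory Defs
  imports Complex_Main
begin

definition smooth_on_set :: "(real \<Rightarrow> real) \<Rightarrow> real set \<Rightarrow> bool" where
  "smooth_on_set u S \<longleftrightarrow>
     (\<exists>D :: nat \<Rightarrow> real \<Rightarrow> real. D 0 = u \<and>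
        (\<forall>k. \<forall>t\<in>S. (D k has_real_derivative D (Suc k) t) (at t within S)))"

end

theory Submission
  imports Defs
begin

inductive_set SX :: "(real \<Rightarrow> real) set" where
  cst: "(\<lambda>t. c) \<in> SX"
| idt: "(\<lambda>t. t) \<in> SX"
| add: "f \<in> SX \<Longrightarrow> g \<in> SX \<Longrightarrow> (\<lambda>t. f t + g t) \<in> SX"
| mlt: "f \<in> SX \<Longrightarrow> g \<in> SX \<Longrightarrow> (\<lambda>t. f t * g t) \<in> SX"
| ex: "f \<in> SX \<Longrightarrow> (\<lambda>t. exp (f t)) \<in> SX"

lemma SX_deriv: "f \<in> SX \<Longrightarrow> \<exists>g\<in>SX. \<forall>t. (f has_real_derivative g t) (at t)"
proof (induction rule: SX.induct)
  case (cst c) show ?case by (intro bexI[of _ "\<lambda>t. 0"]) (auto intro: SX.cst)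
next
  case idt show ?case by (intro bexI[of _ "\<lambda>t. 1"]) (auto intro: SX.cst)
next
  case (add f g)
  then obtain f' g' where "f'\<in>SX" "g'\<in>SX" "\<forall>t. (f has_real_derivative f' t) (at t)"
    "\<forall>t. (g has_real_derivative g' t) (at t)" by blast
  then show ?case
    by (intro bexI[of _ "\<lambda>t. f' t + g' t"]) (auto intro: SX.add derivative_eq_intros)
next
  case (mlt f g)
  then obtain f' g' where "f'\<in>SX" "g'\<in>SX" "\<forall>t. (f has_real_derivative f' t) (at t)"
    "\<forall>t. (g has_real_derivative g' t) (at t)" by blast
  then show ?case
    by (intro bexI[of _ "\<lambda>t. f t * g' t + f' t * g t"])
       (auto intro!: SX.add SX.mlt mlt.hyps derivative_eq_intros)
next
  case (ex f)
  then obtain f' where "f'\<in>SX" "\<forall>t. (f has_real_derivative f' t) (at t)" by blast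
  then show ?case
    by (intro bexI[of _ "\<lambda>t. exp (f t) * f' t"])
       (auto intro!: SX.ex SX.mlt ex.hyps derivative_eq_intros)
qed

lemma SX_smooth:
  assumes "f \<in> SX" shows "smooth_on_set f cS"
proof -
  define step where "step = (\<lambda>h. SOME g. g \<in> SX \<and> (\<forall>t. (h has_real_derivative g t) (at t)))"
  define D where "D = rec_nat f (\<lambda>_ h. step h)"
  have D0: "D 0 = f" by (simp add: D_def)
  have DS: "D (Suc k) = step (D k)" for k by (simp add: D_def)
  have st: "step h \<in> SX \<and> (\<forall>t. (h has_real_derivative step h t) (at t))" if h: "h \<in> SX" for h
  proof -
    have "\<exists>g. g \<in> SX \<and> (\<forall>t. (h has_real_derivative g t) (at t))"
      using SX_deriv[OF h] by blast
    then show ?thesis unfolding step_def by (rule someI_ex)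
  qed
  have DX: "D k \<in> SX" for k
  proof (induction k)
    case 0 show ?case using D0 assms by simp
  next
    case (Suc k) show ?case unfolding DS using st[OF Suc.IH] by blast
  qed
  have "\<forall>k. \<forall>t\<in>cS. (D k has_real_derivative D (Suc k) t) (at t within cS)"
  proof (intro allI ballI)
    fix k t
    have "(D k has_real_derivative D (Suc k) t) (at t)" unfolding DS using st[OF DX[of k]] by blast
    then show "(D k has_real_derivative D (Suc k) t) (at t within cS)"
      by (rule has_field_derivative_at_within)
  qed
  then show ?thesis unfolding smooth_on_set_def using D0 by blast
qed

lemma SX_pow: "f \<in> SX \<Longrightarrow> (\<lambda>t. f t ^ n) \<in> SX"
proof (induction n)
  case 0
  have "(\<lambda>t. f t ^ 0) = (\<lambda>t. 1)" by simp
  then show ?case using SX.cst by metis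
next
  case (Suc n)
  then show ?case using SX.mlt[OF Suc.prems Suc.IH] by simp
qed

lemma SX_sub: "f \<in> SX \<Longrightarrow> g \<in> SX \<Longrightarrow> (\<lambda>t. f t - g t) \<in> SX"
proof -
  assume a: "f \<in> SX" "g \<in> SX"
  have "(\<lambda>t. f t + (-1) * g t) \<in> SX" by (intro SX.add SX.mlt a SX.cst)
  then show ?thesis by simp
qed

theorem lemma4:
  fixes \<delta> \<gamma> \<xi> \<eta> a b :: real
  assumes "\<xi> > 0" and "a > 0"
  shows "\<exists>u :: real \<Rightarrow> real. smooth_on_set u {0..1} \<and>
           (\<exists>z1 z2 :: real \<Rightarrow> real.
              (\<forall>t\<in>{0..1}.
                 (z1 has_real_derivative (- (z1 t ^ 4 * z2 t))) (at t within {0..1}) \<and>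
                 (z2 has_real_derivative
                    (\<delta> * z1 t + 2 * z1 t ^ 3 * z2 t ^ 2 - \<gamma> * z1 t ^ 4 * z2 t + u t))
                    (at t within {0..1})) \<and>
              z1 0 = \<xi> \<and> z2 0 = \<eta> \<and> z1 1 = a \<and> z2 1 = b \<and>
              (\<forall>t\<in>{0..1}. z1 t > 0))"
proof -
  define cA where "cA = ln \<xi>"
  define cB where "cB = - (\<xi> ^ 3 * \<eta>)"
  define cR where "cR = ln a - cA - cB"
  define cS where "cS = - (a ^ 3 * b) - cB"
  define cC where "cC = 3 * cR - cS"
  define cE where "cE = cS - 2 * cR"
  define p where "p = (\<lambda>t::real. cA + cB * t + cC * t ^ 2 + cE * t ^ 3)"
  define p' where "p' = (\<lambda>t::real. cB + 2 * cC * t + 3 * cE * t ^ 2)"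
  define p'' where "p'' = (\<lambda>t::real. 2 * cC + 6 * cE * t)"
  define z1 where "z1 = (\<lambda>t. exp (p t))"
  define z2 where "z2 = (\<lambda>t. - p' t * exp (-3 * p t))"
  define z2' where "z2' = (\<lambda>t. - p'' t * exp (-3 * p t) + 3 * p' t ^ 2 * exp (-3 * p t))"
  define u where "u = (\<lambda>t. z2' t - (\<delta> * z1 t + 2 * z1 t ^ 3 * z2 t ^ 2 - \<gamma> * z1 t ^ 4 * z2 t))"
  have dp: "(p has_real_derivative p' t) (at t)" for t
    unfolding p_def p'_def by (auto intro!: derivative_eq_intros simp: algebra_simps)
  have dp': "(p' has_real_derivative p'' t) (at t)" for t
    unfolding p''_def p'_def by (auto intro!: derivative_eq_intros simp: algebra_simps)
  have e4: "exp (p t) ^ 4 * exp (-3 * p t) = exp (p t)" for t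
  proof -
    have "exp (p t) ^ 4 = exp (4 * p t)" using exp_of_nat_mult[of 4 "p t"] by simp
    then show ?thesis by (simp add: exp_add[symmetric])
  qed
  have d1: "(z1 has_real_derivative (- (z1 t ^ 4 * z2 t))) (at t)" for t
  proof -
    have "(z1 has_real_derivative exp (p t) * p' t) (at t)"
      unfolding z1_def by (auto intro!: derivative_eq_intros dp)
    moreover have "exp (p t) * p' t = - (z1 t ^ 4 * z2 t)"
      unfolding z1_def z2_def using e4[of t] by (simp add: algebra_simps)
    ultimately show ?thesis by simp
  qed
  have d2: "(z2 has_real_derivative z2' t) (at t)" for t
    unfolding z2_def z2'_def
    by (auto intro!: derivative_eq_intros dp dp' simp: algebra_simps power2_eq_square)
  have pX: "p \<in> SX" unfolding p_def
    by (intro SX.add SX.mlt SX.cst SX.idt SX_pow)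
  have p'X: "p' \<in> SX" unfolding p'_def
    by (intro SX.add SX.mlt SX.cst SX.idt SX_pow)
  have p''X: "p'' \<in> SX" unfolding p''_def
    by (intro SX.add SX.mlt SX.cst SX.idt SX_pow)
  have z1X: "z1 \<in> SX" unfolding z1_def by (intro SX.ex pX)
  have eX: "(\<lambda>t. exp (-3 * p t)) \<in> SX" by (intro SX.ex SX.mlt SX.cst pX)
  have z2X: "z2 \<in> SX"
  proof -
    have "(\<lambda>t. (-1) * p' t * exp (-3 * p t)) \<in> SX" by (intro SX.mlt SX.cst p'X eX)
    then show ?thesis unfolding z2_def by simp
  qed
  have z2'X: "z2' \<in> SX"
  proof -
    have "(\<lambda>t. (-1) * p'' t * exp (-3 * p t) + 3 * p' t ^ 2 * exp (-3 * p t)) \<in> SX"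
      by (intro SX.add SX.mlt SX.cst p'X p''X eX SX_pow)
    then show ?thesis unfolding z2'_def by simp
  qed
  have uX: "u \<in> SX" unfolding u_def
    by (intro SX_sub SX.add SX.mlt SX.cst z1X z2X z2'X SX_pow)
  have p0: "p 0 = ln \<xi>" by (simp add: p_def cA_def)
  have p1: "p 1 = ln a" by (simp add: p_def cA_def cC_def cE_def cR_def cS_def)
  have q0: "p' 0 = - (\<xi> ^ 3 * \<eta>)" by (simp add: p'_def cB_def)
  have q1: "p' 1 = - (a ^ 3 * b)" by (simp add: p'_def cC_def cE_def cR_def cS_def)
  have ex3: "exp (-3 * ln x) * x ^ 3 = 1" if "x > 0" for x :: real
  proof -
    have "exp (3 * ln x) = x ^ 3" using exp_of_nat_mult[of 3 "ln x"] that by simp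
    moreover have "exp (-3 * ln x) * exp (3 * ln x) = exp (-3 * ln x + 3 * ln x)"
      by (rule exp_add[symmetric])
    ultimately show ?thesis by simp
  qed
  have "z2 0 = \<eta>" unfolding z2_def using q0 p0 ex3[OF assms(1)] by (simp add: algebra_simps)
  moreover have "z2 1 = b" unfolding z2_def using q1 p1 ex3[OF assms(2)] by (simp add: algebra_simps)
  moreover have "z1 0 = \<xi>" "z1 1 = a" using p0 p1 assms by (simp_all add: z1_def)
  moreover have "\<forall>t\<in>{0..1}. z1 t > 0" by (simp add: z1_def)
  moreover have "\<forall>t\<in>{0..1}.
                 (z1 has_real_derivative (- (z1 t ^ 4 * z2 t))) (at t within {0..1}) \<and>
                 (z2 has_real_derivative
                    (\<delta> * z1 t + 2 * z1 t ^ 3 * z2 t ^ 2 - \<gamma> * z1 t ^ 4 * z2 t + u t))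
                    (at t within {0..1})"
    using d1 d2 by (auto simp: u_def intro: has_field_derivative_at_within)
  ultimately show ?thesis using SX_smooth[OF uX] by blast
qed

end
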